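(* Let $(G,k)$ be an instance of PITVD and let $P=(v_1,v_2,\dots,v_\ell)$ be a degree-2-tail in $G$ with $\ell\ge3$ vertices, and let $Z=\{v_3,v_4,\dots,v_\ell\}$. Then $(G,k)$ is a yes-instance of PITVD if and only if $(G-Z,k)$ is a yes-instance of PITVD.
   Context: PITVD: the input is an undirected multigraph $G$ (no self-loops) and an integer $k$; the question is whether there exists $X\subseteq V(G)$ with $|X|\le k$ such that $G-X$ is a simple graph and every connected component of $G-X$ is a proper interval graph or a tree. A path $(v_1,\dots,v_\ell)$ (distinct vertices, consecutive ones adjacent) is a degree-2-path if every internal vertex has degree exactly $2$ in $G$; it is a degree-2-tail if moreover $d_G(v_1)>2$ and $d_G(v_\ell)=1$. *)

theory Defs
  imports Main "HOL-Library.Multiset" Complex_Main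
begin

text \<open>A finite undirected multigraph without self-loops on vertex set V, given by an
edge-multiplicity function m (m u v = number of parallel edges between u and v).\<close>
definition multigraph :: "'a set \<Rightarrow> ('a \<Rightarrow> 'a \<Rightarrow> nat) \<Rightarrow> bool" where
  "multigraph V m \<longleftrightarrow> finite V \<and> (\<forall>u v. m u v = m v u) \<and> (\<forall>v. m v v = 0)
     \<and> (\<forall>u v. 0 < m u v \<longrightarrow> u \<in> V \<and> v \<in> V)"

definition adj :: "('a \<Rightarrow> 'a \<Rightarrow> nat) \<Rightarrow> 'a \<Rightarrow> 'a \<Rightarrow> bool" where
  "adj m u v \<longleftrightarrow> 0 < m u v"

definition deg :: "'a set \<Rightarrow> ('a \<Rightarrow> 'a \<Rightarrow> nat) \<Rightarrow> 'a \<Rightarrow> nat" where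
  "deg V m v = (\<Sum>u\<in>V. m v u)"

definition del_vs :: "('a \<Rightarrow> 'a \<Rightarrow> nat) \<Rightarrow> 'a set \<Rightarrow> 'a \<Rightarrow> 'a \<Rightarrow> nat" where
  "del_vs m X u v = (if u \<in> X \<or> v \<in> X then 0 else m u v)"

definition simple_mg :: "('a \<Rightarrow> 'a \<Rightarrow> nat) \<Rightarrow> bool" where
  "simple_mg m \<longleftrightarrow> (\<forall>u v. m u v \<le> 1)"

definition component :: "'a set \<Rightarrow> ('a \<Rightarrow> 'a \<Rightarrow> nat) \<Rightarrow> 'a set \<Rightarrow> bool" where
  "component V m C \<longleftrightarrow> (\<exists>v\<in>V. C = {u \<in> V. (adj m)\<^sup>*\<^sup>* v u})"

definition proper_interval :: "('a \<Rightarrow> 'a \<Rightarrow> nat) \<Rightarrow> 'a set \<Rightarrow> bool" where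
  "proper_interval m C \<longleftrightarrow> (\<exists>l r :: 'a \<Rightarrow> real.
     (\<forall>v\<in>C. l v \<le> r v) \<and>
     (\<forall>u\<in>C. \<forall>v\<in>C. u \<noteq> v \<longrightarrow> (adj m u v \<longleftrightarrow> {l u..r u} \<inter> {l v..r v} \<noteq> {})) \<and>
     (\<forall>u\<in>C. \<forall>v\<in>C. \<not> ({l v..r v} \<subset> {l u..r u})))"

definition is_cycle :: "('a \<Rightarrow> 'a \<Rightarrow> nat) \<Rightarrow> 'a set \<Rightarrow> 'a list \<Rightarrow> bool" where
  "is_cycle m C cs \<longleftrightarrow> 3 \<le> length cs \<and> distinct cs \<and> set cs \<subseteq> C \<and>
     (\<forall>i < length cs. adj m (cs ! i) (cs ! ((i + 1) mod length cs)))"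

definition is_tree :: "('a \<Rightarrow> 'a \<Rightarrow> nat) \<Rightarrow> 'a set \<Rightarrow> bool" where
  "is_tree m C \<longleftrightarrow> C \<noteq> {} \<and>
     (\<forall>u\<in>C. \<forall>v\<in>C. (\<lambda>x y. x \<in> C \<and> y \<in> C \<and> adj m x y)\<^sup>*\<^sup>* u v) \<and>
     \<not> (\<exists>cs. is_cycle m C cs)"

definition pitvd_yes :: "'a set \<Rightarrow> ('a \<Rightarrow> 'a \<Rightarrow> nat) \<Rightarrow> nat \<Rightarrow> bool" where
  "pitvd_yes V m k \<longleftrightarrow> (\<exists>X \<subseteq> V. card X \<le> k \<and> simple_mg (del_vs m X) \<and>
     (\<forall>C. component (V - X) (del_vs m X) C \<longrightarrow>
          proper_interval (del_vs m X) C \<or> is_tree (del_vs m X) C))"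

definition deg2_path :: "'a set \<Rightarrow> ('a \<Rightarrow> 'a \<Rightarrow> nat) \<Rightarrow> 'a list \<Rightarrow> bool" where
  "deg2_path V m P \<longleftrightarrow> P \<noteq> [] \<and> distinct P \<and> set P \<subseteq> V \<and>
     (\<forall>i. i + 1 < length P \<longrightarrow> adj m (P ! i) (P ! (i + 1))) \<and>
     (\<forall>i. 0 < i \<and> i + 1 < length P \<longrightarrow> deg V m (P ! i) = 2)"

definition deg2_tail :: "'a set \<Rightarrow> ('a \<Rightarrow> 'a \<Rightarrow> nat) \<Rightarrow> 'a list \<Rightarrow> bool" where
  "deg2_tail V m P \<longleftrightarrow> deg2_path V m P \<and> deg V m (hd P) > 2 \<and> deg V m (last P) = 1"

end

theory Submission
  imports Defs
begin


lemma in_set_drop_iff: "x \<in> set (drop n xs) \<longleftrightarrow> (\<exists>i. n \<le> i \<and> i < length xs \<and> xs ! i = x)"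
  apply (auto simp: set_conv_nth)
   apply (rule_tac x="n + i" in exI, auto)
  apply (rule_tac x="i - n" in exI, auto)
  done

lemma ivl_int: "(a::real) \<le> b \<Longrightarrow> c \<le> d \<Longrightarrow> ({a..b} \<inter> {c..d} \<noteq> {}) \<longleftrightarrow> (a \<le> d \<and> c \<le> b)"
  by (auto simp: Int_atLeastAtMost)

lemma ivl_psub: "(a::real) \<le> b \<Longrightarrow> c \<le> d \<Longrightarrow> ({a..b} \<subset> {c..d}) \<longleftrightarrow> (c \<le> a \<and> b \<le> d \<and> (c < a \<or> b < d))"
  by (auto simp: psubset_eq subset_eq) (smt (verit) atLeastAtMost_iff)+

definition model :: "('a \<Rightarrow> 'a \<Rightarrow> nat) \<Rightarrow> 'a set \<Rightarrow> ('a \<Rightarrow> real) \<Rightarrow> ('a \<Rightarrow> real) \<Rightarrow> bool" where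
  "model E C l r \<longleftrightarrow> (\<forall>v\<in>C. l v \<le> r v) \<and>
     (\<forall>u\<in>C. \<forall>v\<in>C. u \<noteq> v \<longrightarrow> (adj E u v \<longleftrightarrow> l u \<le> r v \<and> l v \<le> r u)) \<and>
     (\<forall>u\<in>C. \<forall>v\<in>C. \<not> (l u \<le> l v \<and> r v \<le> r u \<and> (l u < l v \<or> r v < r u)))"

lemma PI_model: "proper_interval E C \<longleftrightarrow> (\<exists>l r. model E C l r)"
proof
  assume "proper_interval E C"
  then obtain l r :: "'a \<Rightarrow> real" where h: "\<forall>v\<in>C. l v \<le> r v"
     "\<forall>u\<in>C. \<forall>v\<in>C. u \<noteq> v \<longrightarrow> (adj E u v \<longleftrightarrow> {l u..r u} \<inter> {l v..r v} \<noteq> {})"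
     "\<forall>u\<in>C. \<forall>v\<in>C. \<not> ({l v..r v} \<subset> {l u..r u})"
    unfolding proper_interval_def by blast
  have "model E C l r" unfolding model_def
  proof (intro conjI ballI impI)
    show "l v \<le> r v" if "v \<in> C" for v using h that by blast
    show "adj E u v \<longleftrightarrow> l u \<le> r v \<and> l v \<le> r u" if "u \<in> C" "v \<in> C" "u \<noteq> v" for u v
      using h(2) that ivl_int[of "l u" "r u" "l v" "r v"] h(1) by simp
    show "\<not> (l u \<le> l v \<and> r v \<le> r u \<and> (l u < l v \<or> r v < r u))" if "u \<in> C" "v \<in> C" for u v
      using h(3) that ivl_psub[of "l v" "r v" "l u" "r u"] h(1) by simp
  qed
  then show "\<exists>l r. model E C l r" by blast
next
  assume "\<exists>l r. model E C l r"
  then obtain l r where h: "model E C l r" by blast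
  show "proper_interval E C" unfolding proper_interval_def
  proof (rule exI[of _ l], rule exI[of _ r], intro conjI ballI impI)
    show "l v \<le> r v" if "v \<in> C" for v using h that unfolding model_def by blast
    show "adj E u v \<longleftrightarrow> {l u..r u} \<inter> {l v..r v} \<noteq> {}" if "u \<in> C" "v \<in> C" "u \<noteq> v" for u v
      using h that ivl_int[of "l u" "r u" "l v" "r v"] unfolding model_def by simp
    show "\<not> ({l v..r v} \<subset> {l u..r u})" if "u \<in> C" "v \<in> C" for u v
      using h that ivl_psub[of "l v" "r v" "l u" "r u"] unfolding model_def by simp
  qed
qed

lemma model_reflect: "model E C l r \<Longrightarrow> model E C (\<lambda>x. - r x) (\<lambda>x. - l x)"
  unfolding model_def
proof (elim conjE, intro conjI ballI impI)
  assume h: "\<forall>v\<in>C. l v \<le> r v" "\<forall>u\<in>C. \<forall>v\<in>C. u \<noteq> v \<longrightarrow> adj E u v = (l u \<le> r v \<and> l v \<le> r u)"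
     "\<forall>u\<in>C. \<forall>v\<in>C. \<not> (l u \<le> l v \<and> r v \<le> r u \<and> (l u < l v \<or> r v < r u))"
  show "- r v \<le> - l v" if "v \<in> C" for v using h that by auto
  show "adj E u v = (- r u \<le> - l v \<and> - r v \<le> - l u)" if "u \<in> C" "v \<in> C" "u \<noteq> v" for u v
    using h(2) that by auto
  show "\<not> (- r u \<le> - r v \<and> - l v \<le> - l u \<and> (- r u < - r v \<or> - l v < - l u))" if "u \<in> C" "v \<in> C" for u v
    using h(3) that by auto
qed

definition wfg :: "'a set \<Rightarrow> ('a \<Rightarrow> 'a \<Rightarrow> nat) \<Rightarrow> bool" where
  "wfg W E \<longleftrightarrow> (\<forall>x y. E x y = E y x) \<and> (\<forall>x y. adj E x y \<longrightarrow> x \<in> W \<and> y \<in> W)"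

lemma adj_sym: "wfg W E \<Longrightarrow> adj E x y = adj E y x"
  by (simp add: wfg_def adj_def)

lemma R_sym: assumes "wfg W E" "(adj E)\<^sup>*\<^sup>* x y" shows "(adj E)\<^sup>*\<^sup>* y x"
  using assms(2)
proof (induction rule: rtranclp_induct)
  case base then show ?case by simp
next
  case (step y z)
  then show ?case using adj_sym[OF assms(1)]
    by (metis converse_rtranclp_into_rtranclp)
qed

lemma comp_root: assumes "wfg W E" "component W E C" "x \<in> C"
  shows "C = {u\<in>W. (adj E)\<^sup>*\<^sup>* x u}"
proof -
  obtain v where v: "v \<in> W" "C = {u\<in>W. (adj E)\<^sup>*\<^sup>* v u}"
    using assms(2) unfolding component_def by blast
  have "(adj E)\<^sup>*\<^sup>* v x" using v assms(3) by blast
  moreover have "(adj E)\<^sup>*\<^sup>* x v" using R_sym[OF assms(1) calculation] .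
  ultimately show ?thesis using v
    by (auto intro: rtranclp_trans)
qed

lemma comp_closed_eq:
  assumes "wfg W E" "component W E C" "S \<subseteq> W"
    "\<forall>x\<in>S. \<forall>y. adj E x y \<longrightarrow> y \<in> S"
    "\<forall>a\<in>S. \<forall>b\<in>S. (adj E)\<^sup>*\<^sup>* a b" "s \<in> S" "s \<in> C"
  shows "C = S"
proof -
  have C: "C = {u\<in>W. (adj E)\<^sup>*\<^sup>* s u}" using comp_root[OF assms(1,2,7)] .
  have R: "(adj E)\<^sup>*\<^sup>* s u \<Longrightarrow> u \<in> S" for u
  proof (induction rule: rtranclp_induct)
    case base show ?case using assms(6) .
  next
    case (step y z) then show ?case using assms(4) by blast
  qed
  show ?thesis
  proof
    show "C \<subseteq> S" using C R by blast
    show "S \<subseteq> C" unfolding C using assms(3,5,6) by blast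
  qed
qed

lemma comp_conn:
  assumes "wfg W E" "component W E C" "u \<in> C" "w \<in> C"
  shows "(\<lambda>x y. x \<in> C \<and> y \<in> C \<and> adj E x y)\<^sup>*\<^sup>* u w"
proof -
  let ?I = "\<lambda>x y. x \<in> C \<and> y \<in> C \<and> adj E x y"
  have main: "(adj E)\<^sup>*\<^sup>* u x \<Longrightarrow> ?I\<^sup>*\<^sup>* u x \<and> x \<in> C" for x
  proof (induction rule: rtranclp_induct)
    case base then show ?case using assms(3) by simp
  next
    case (step y z)
    have "z \<in> W" using step(2) assms(1) unfolding wfg_def by blast
    moreover have "(adj E)\<^sup>*\<^sup>* u z" using step(1,2) by auto
    ultimately have "z \<in> C" using comp_root[OF assms(1,2,3)] by blast
    then show ?case using step by (auto intro: rtranclp.rtrancl_into_rtrancl)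
  qed
  have symI: "?I\<^sup>*\<^sup>* a b \<Longrightarrow> ?I\<^sup>*\<^sup>* b a" for a b
  proof (induction rule: rtranclp_induct)
    case base then show ?case by simp
  next
    case (step y z)
    then show ?case using adj_sym[OF assms(1)]
      by (metis (mono_tags, lifting) converse_rtranclp_into_rtranclp)
  qed
  have "(adj E)\<^sup>*\<^sup>* u w" using comp_root[OF assms(1,2,3)] assms(4) by blast
  then show ?thesis using main by blast
qed

lemma component_intro: "v \<in> W \<Longrightarrow> component W E {u\<in>W. (adj E)\<^sup>*\<^sup>* v u}"
  unfolding component_def by blast

lemma adj_del: "adj (del_vs m Y) u v \<longleftrightarrow> u \<notin> Y \<and> v \<notin> Y \<and> adj m u v"
  by (simp add: adj_def del_vs_def)

lemma del_del: "del_vs (del_vs m A) B = del_vs m (A \<union> B)"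
  by (auto simp: del_vs_def fun_eq_iff)

lemma wfg_del: "multigraph V m \<Longrightarrow> wfg (V - Y) (del_vs m Y)"
  unfolding wfg_def multigraph_def by (auto simp: adj_def del_vs_def)

lemma adj_irrefl: "multigraph V m \<Longrightarrow> \<not> adj m x x"
  unfolding multigraph_def adj_def by simp

lemma loc_PI: "\<forall>u\<in>C. \<forall>v\<in>C. adj E u v = adj E' u v \<Longrightarrow> proper_interval E C = proper_interval E' C"
proof -
  assume a: "\<forall>u\<in>C. \<forall>v\<in>C. adj E u v = adj E' u v"
  have "model E C l r = model E' C l r" for l r unfolding model_def using a by auto
  then have "model E C = model E' C" by (intro ext)
  then show ?thesis unfolding PI_model by simp
qed

lemma loc_cycle: "\<forall>u\<in>C. \<forall>v\<in>C. adj E u v = adj E' u v \<Longrightarrow> is_cycle E C cs = is_cycle E' C cs"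
proof -
  assume a: "\<forall>u\<in>C. \<forall>v\<in>C. adj E u v = adj E' u v"
  have "set cs \<subseteq> C \<Longrightarrow> 3 \<le> length cs \<Longrightarrow> i < length cs \<Longrightarrow>
     adj E (cs ! i) (cs ! ((i + 1) mod length cs)) = adj E' (cs ! i) (cs ! ((i + 1) mod length cs))" for i
  proof -
    assume h: "set cs \<subseteq> C" "3 \<le> length cs" "i < length cs"
    have "(i + 1) mod length cs < length cs" using h by (intro mod_less_divisor) linarith
    then have "cs ! ((i + 1) mod length cs) \<in> C" "cs ! i \<in> C" using h nth_mem by blast+
    then show ?thesis using a by blast
  qed
  then show ?thesis unfolding is_cycle_def by auto
qed

lemma loc_tree: assumes "\<forall>u\<in>C. \<forall>v\<in>C. adj E u v = adj E' u v"
  shows "is_tree E C = is_tree E' C"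
proof -
  have "(\<lambda>x y. x \<in> C \<and> y \<in> C \<and> adj E x y) = (\<lambda>x y. x \<in> C \<and> y \<in> C \<and> adj E' x y)"
    using assms by (auto simp: fun_eq_iff)
  then show ?thesis unfolding is_tree_def using loc_cycle[OF assms] by simp
qed

lemma PI_mono: assumes "proper_interval E C" "C' \<subseteq> C" "\<forall>u\<in>C'. \<forall>v\<in>C'. adj E' u v = adj E u v"
  shows "proper_interval E' C'"
proof -
  obtain l r where h: "model E C l r" using assms(1) PI_model by blast
  have "model E' C' l r" using h assms(2,3) unfolding model_def by (simp add: subset_iff)
  then show ?thesis using PI_model by blast
qed

lemma cycle_mono: "is_cycle E C cs \<Longrightarrow> (\<And>x y. adj E x y \<Longrightarrow> adj E' x y) \<Longrightarrow> set cs \<subseteq> C'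
   \<Longrightarrow> is_cycle E' C' cs"
  unfolding is_cycle_def by auto

lemma cycle_nbrs:
  assumes "is_cycle E C cs" "x \<in> set cs" "\<And>a b. adj E a b = adj E b a"
  shows "\<exists>a b. a \<in> set cs \<and> b \<in> set cs \<and> a \<noteq> b \<and> adj E x a \<and> adj E x b"
proof -
  let ?n = "length cs"
  obtain j where j: "j < ?n" "cs ! j = x" using assms(2) by (auto simp: in_set_conv_nth)
  have n3: "3 \<le> ?n" and dist: "distinct cs" and ad: "\<forall>i < ?n. adj E (cs ! i) (cs ! ((i + 1) mod ?n))"
    using assms(1) unfolding is_cycle_def by auto
  define p where "p = (if j = 0 then ?n - 1 else j - 1)"
  have p: "p < ?n" "(p + 1) mod ?n = j" using j n3 by (auto simp: p_def)
  have a1: "adj E x (cs ! ((j + 1) mod ?n))" using ad j by auto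
  have "adj E (cs ! p) x" using ad p j by auto
  then have a2: "adj E x (cs ! p)" using assms(3)[of x "cs ! p"] by simp
  have ne: "(j + 1) mod ?n \<noteq> p" using j n3 unfolding p_def
    by (cases "j + 1 < ?n") (auto simp: mod_if)
  have "(j + 1) mod ?n < ?n" using n3 by (intro mod_less_divisor) linarith
  then have "cs ! ((j + 1) mod ?n) \<noteq> cs ! p"
    using ne nth_eq_iff_index_eq[OF dist _ p(1)] by blast
  moreover have "cs ! ((j + 1) mod ?n) \<in> set cs" "cs ! p \<in> set cs"
    using \<open>(j + 1) mod ?n < ?n\<close> p(1) nth_mem by blast+
  ultimately show ?thesis using a1 a2 by blast
qed



locale tail =
  fixes V :: "'a set" and m :: "'a \<Rightarrow> 'a \<Rightarrow> nat" and P :: "'a list"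
  assumes mg: "multigraph V m" and dt: "deg2_tail V m P" and len: "3 \<le> length P"
begin

abbreviation "L \<equiv> length P"

lemma finV: "finite V" using mg unfolding multigraph_def by simp
lemma msym: "m u v = m v u" using mg unfolding multigraph_def by simp
lemma mV: "0 < m u v \<Longrightarrow> u \<in> V \<and> v \<in> V" using mg unfolding multigraph_def by blast
lemma asym: "adj m u v = adj m v u" using msym by (simp add: adj_def)
lemma dist: "distinct P" using dt unfolding deg2_tail_def deg2_path_def by simp
lemma Pne: "P \<noteq> []" using len by auto
lemma PV: "i < L \<Longrightarrow> P ! i \<in> V" using dt unfolding deg2_tail_def deg2_path_def by auto
lemma padj: "i + 1 < L \<Longrightarrow> adj m (P ! i) (P ! (i + 1))"
  using dt unfolding deg2_tail_def deg2_path_def by auto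
lemma padj': "1 \<le> i \<Longrightarrow> i < L \<Longrightarrow> adj m (P ! i) (P ! (i - 1))"
  using padj[of "i - 1"] asym by simp
lemma pdeg: "0 < i \<Longrightarrow> i + 1 < L \<Longrightarrow> deg V m (P ! i) = 2"
  using dt unfolding deg2_tail_def deg2_path_def by auto
lemma ldeg: "deg V m (P ! (L - 1)) = 1"
proof -
  have "last P = P ! (L - 1)" using len by (intro last_conv_nth) auto
  then show ?thesis using dt unfolding deg2_tail_def by simp
qed
lemma Pinj: "i < L \<Longrightarrow> j < L \<Longrightarrow> P ! i = P ! j \<longleftrightarrow> i = j"
  using dist by (simp add: nth_eq_iff_index_eq)

lemma sum_le_deg: "S \<subseteq> V \<Longrightarrow> sum (m u) S \<le> deg V m u"
  unfolding deg_def using finV by (intro sum_mono2) auto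

lemma nbr_aux:
  assumes i: "1 \<le> i" "i < L" and a: "adj m (P ! i) v"
  shows "v = P ! (i - 1) \<or> (i + 1 < L \<and> v = P ! (i + 1))"
proof (rule ccontr)
  assume nv: "\<not> ?thesis"
  let ?u = "P ! i" let ?a = "P ! (i - 1)"
  have vV: "v \<in> V" using a mV unfolding adj_def by blast
  have ma: "1 \<le> m ?u ?a" using padj'[OF i] unfolding adj_def by simp
  have mv: "1 \<le> m ?u v" using a unfolding adj_def by simp
  show False
  proof (cases "i + 1 < L")
    case True
    let ?b = "P ! (i + 1)"
    have mb: "1 \<le> m ?u ?b" using padj[OF True] unfolding adj_def by simp
    have ab: "?a \<noteq> ?b" using Pinj[of "i - 1" "i + 1"] i True by simp
    have sub: "{?a, ?b, v} \<subseteq> V" using PV i True vV by auto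
    have "?a \<noteq> v" "?b \<noteq> v" using nv True by auto
    then have "sum (m ?u) {?a, ?b, v} = m ?u ?a + m ?u ?b + m ?u v"
      using ab by simp
    moreover have "sum (m ?u) {?a, ?b, v} \<le> 2" using sum_le_deg[OF sub, of ?u] pdeg[of i] i True by simp
    ultimately show False using ma mb mv by simp
  next
    case False
    then have iL: "i = L - 1" using i by simp
    have sub: "{?a, v} \<subseteq> V" using PV i vV by auto
    have "?a \<noteq> v" using nv by auto
    then have "sum (m ?u) {?a, v} = m ?u ?a + m ?u v" by simp
    moreover have "sum (m ?u) {?a, v} \<le> 1" using sum_le_deg[OF sub, of ?u] ldeg iL by simp
    ultimately show False using ma mv by simp
  qed
qed

lemma nbr: "1 \<le> i \<Longrightarrow> i < L \<Longrightarrow> adj m (P ! i) v \<longleftrightarrow> v = P ! (i - 1) \<or> (i + 1 < L \<and> v = P ! (i + 1))"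
  using nbr_aux padj padj' by blast

lemma mle1: assumes i: "1 \<le> i" "i < L" shows "m (P ! i) v \<le> 1"
proof (cases "adj m (P ! i) v")
  case False then show ?thesis by (simp add: adj_def)
next
  case True
  let ?u = "P ! i" let ?a = "P ! (i - 1)"
  have ma: "1 \<le> m ?u ?a" using padj'[OF i] unfolding adj_def by simp
  show ?thesis
  proof (cases "i + 1 < L")
    case T: True
    let ?b = "P ! (i + 1)"
    have mb: "1 \<le> m ?u ?b" using padj[OF T] unfolding adj_def by simp
    have ab: "?a \<noteq> ?b" using Pinj[of "i - 1" "i + 1"] i T by simp
    have sub: "{?a, ?b} \<subseteq> V" using PV i T by auto
    have "sum (m ?u) {?a, ?b} = m ?u ?a + m ?u ?b" using ab by simp
    moreover have "sum (m ?u) {?a, ?b} \<le> 2" using sum_le_deg[OF sub, of ?u] pdeg[of i] i T by simp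
    moreover have "v = ?a \<or> v = ?b" using nbr[OF i] True T by blast
    ultimately show ?thesis using ma mb by auto
  next
    case False
    then have iL: "i = L - 1" using i by simp
    have sub: "{?a} \<subseteq> V" using PV i by auto
    have "m ?u ?a \<le> 1" using sum_le_deg[OF sub, of ?u] ldeg iL by simp
    moreover have "v = ?a" using nbr[OF i] True False by blast
    ultimately show ?thesis by simp
  qed
qed

lemma adjP: assumes "i < L" "j < L" shows "adj m (P ! i) (P ! j) \<longleftrightarrow> (i = j + 1 \<or> j = i + 1)"
proof (cases "1 \<le> i")
  case True
  have e1: "P ! j = P ! (i - 1) \<longleftrightarrow> j = i - 1" using Pinj[of j "i - 1"] assms by simp
  have e2: "i + 1 < L \<Longrightarrow> P ! j = P ! (i + 1) \<longleftrightarrow> j = i + 1" using Pinj[of j "i + 1"] assms by simp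
  have "adj m (P ! i) (P ! j) \<longleftrightarrow> (j = i - 1 \<or> (i + 1 < L \<and> j = i + 1))"
    using nbr[OF True assms(1), of "P ! j"] e1 e2 by blast
  then show ?thesis using True assms by auto
next
  case False
  then have i0: "i = 0" by simp
  show ?thesis
  proof (cases "j = 0")
    case True then show ?thesis using i0 adj_irrefl[OF mg] by simp
  next
    case False
    then have j1: "1 \<le> j" by simp
    have e1: "P ! 0 = P ! (j - 1) \<longleftrightarrow> j = 1" proof -
      have "P \<noteq> []" "j - 1 < L" "0 < L" using len assms by auto
      then show ?thesis using Pinj[of 0 "j - 1"] j1 by auto
    qed
    have e2: "j + 1 < L \<Longrightarrow> P ! 0 \<noteq> P ! (j + 1)" proof -
      have "P \<noteq> []" using len by auto
      then show "j + 1 < L \<Longrightarrow> P ! 0 \<noteq> P ! (j + 1)" using Pinj[of 0 "j + 1"] by simp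
    qed
    have "adj m (P ! j) (P ! 0) \<longleftrightarrow> j = 1"
      using nbr[OF j1 assms(2), of "P ! 0"] e1 e2 by blast
    then show ?thesis using asym i0 by auto
  qed
qed

lemma nonP: assumes "1 \<le> i" "i < L" "y \<notin> set P" shows "\<not> adj m (P ! i) y"
proof
  assume "adj m (P ! i) y"
  then have "y = P ! (i - 1) \<or> (i + 1 < L \<and> y = P ! (i + 1))" using nbr assms by blast
  moreover have "P ! (i - 1) \<in> set P" using assms by simp
  ultimately show False using assms nth_mem[of "i + 1" P] by auto
qed

lemma nocyc: "1 \<le> i \<Longrightarrow> i < L \<Longrightarrow> is_cycle m C cs \<Longrightarrow> P ! i \<notin> set cs"
proof (induction "L - i" arbitrary: i rule: less_induct)
  case less
  show ?case
  proof
    assume "P ! i \<in> set cs"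
    then obtain a b where ab: "a \<in> set cs" "b \<in> set cs" "a \<noteq> b" "adj m (P ! i) a" "adj m (P ! i) b"
      using cycle_nbrs[OF less.prems(3)] asym by blast
    have na: "a = P ! (i - 1) \<or> (i + 1 < L \<and> a = P ! (i + 1))" using ab(4) nbr less.prems by blast
    have nb: "b = P ! (i - 1) \<or> (i + 1 < L \<and> b = P ! (i + 1))" using ab(5) nbr less.prems by blast
    have "i + 1 < L \<and> P ! (i + 1) \<in> set cs" using na nb ab by auto
    moreover have lt: "L - (i + 1) < L - i" using less.prems(2) by simp
    moreover have "P ! (i + 1) \<notin> set cs"
      using less.hyps[OF lt _ _ less.prems(3)] calculation by simp
    ultimately show False by simp
  qed
qed

definition "Z = set (drop 2 P)"
lemma Z_iff: "x \<in> Z \<longleftrightarrow> (\<exists>i. 2 \<le> i \<and> i < L \<and> P ! i = x)"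
  unfolding Z_def by (rule in_set_drop_iff)

definition "idx x = (THE i. i < L \<and> P ! i = x)"
lemma idx_nth: "i < L \<Longrightarrow> idx (P ! i) = i"
  unfolding idx_def using Pinj by (intro the_equality) auto

lemma pathR_le:
  assumes "\<forall>t. jj \<le> t \<and> t < L \<longrightarrow> P ! t \<notin> Y" "jj \<le> i" "i \<le> j" "j < L"
  shows "(adj (del_vs m Y))\<^sup>*\<^sup>* (P ! i) (P ! j)"
  using assms(3,4)
proof (induction j)
  case 0 then show ?case by simp
next
  case (Suc j)
  show ?case
  proof (cases "i = Suc j")
    case True then show ?thesis by simp
  next
    case False
    then have "i \<le> j" using Suc by simp
    then have "(adj (del_vs m Y))\<^sup>*\<^sup>* (P ! i) (P ! j)" using Suc by simp
    moreover have "adj (del_vs m Y) (P ! j) (P ! Suc j)"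
      using padj[of j] Suc assms(1,2) \<open>i \<le> j\<close> by (simp add: adj_del)
    ultimately show ?thesis by (rule rtranclp.rtrancl_into_rtrancl)
  qed
qed

lemma pathR:
  assumes "\<forall>t. jj \<le> t \<and> t < L \<longrightarrow> P ! t \<notin> Y" "jj \<le> i" "i < L" "jj \<le> j" "j < L"
  shows "(adj (del_vs m Y))\<^sup>*\<^sup>* (P ! i) (P ! j)"
proof (cases "i \<le> j")
  case True then show ?thesis using pathR_le assms by simp
next
  case False
  then have "(adj (del_vs m Y))\<^sup>*\<^sup>* (P ! j) (P ! i)" using pathR_le assms by simp
  then show ?thesis using R_sym[OF wfg_del[OF mg]] by blast
qed

lemma path_model:
  assumes "\<forall>t. jj \<le> t \<and> t < L \<longrightarrow> P ! t \<notin> Y"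
  shows "model (del_vs m Y) (set (drop jj P)) (\<lambda>x. real (idx x)) (\<lambda>x. real (idx x) + 1)"
  unfolding model_def
proof (intro conjI ballI impI)
  fix u v assume u: "u \<in> set (drop jj P)" and v: "v \<in> set (drop jj P)"
  obtain i where i: "jj \<le> i" "i < L" "P ! i = u" using u in_set_drop_iff by metis
  obtain j where j: "jj \<le> j" "j < L" "P ! j = v" using v in_set_drop_iff by metis
  show "\<not> (real (idx u) \<le> real (idx v) \<and> real (idx v) + 1 \<le> real (idx u) + 1 \<and>
          (real (idx u) < real (idx v) \<or> real (idx v) + 1 < real (idx u) + 1))" by auto
  assume "u \<noteq> v"
  have "adj (del_vs m Y) u v \<longleftrightarrow> (i = j + 1 \<or> j = i + 1)"
    using adj_del adjP i j assms by metis
  moreover have "i \<noteq> j" using \<open>u \<noteq> v\<close> i j by auto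
  moreover have "real i \<le> real j + 1 \<longleftrightarrow> i \<le> j + 1" "real j \<le> real i + 1 \<longleftrightarrow> j \<le> i + 1" by linarith+
  ultimately show "adj (del_vs m Y) u v = (real (idx u) \<le> real (idx v) + 1 \<and> real (idx v) \<le> real (idx u) + 1)"
    using i j idx_nth by auto
qed simp

end


definition good :: "'a set \<Rightarrow> ('a \<Rightarrow> 'a \<Rightarrow> nat) \<Rightarrow> bool" where
  "good W E \<longleftrightarrow> (\<forall>C. component W E C \<longrightarrow> proper_interval E C \<or> is_tree E C)"

lemma good_mono:
  assumes mg: "multigraph V m" and XY: "X \<subseteq> Y" and g: "good (V - X) (del_vs m X)"
  shows "good (V - Y) (del_vs m Y)"
  unfolding good_def
proof (intro allI impI)
  fix C' assume comp: "component (V - Y) (del_vs m Y) C'"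
  obtain v where v: "v \<in> V - Y" "C' = {u \<in> V - Y. (adj (del_vs m Y))\<^sup>*\<^sup>* v u}"
    using comp unfolding component_def by blast
  define C where "C = {u \<in> V - X. (adj (del_vs m X))\<^sup>*\<^sup>* v u}"
  have compC: "component (V - X) (del_vs m X) C" unfolding C_def
    using v XY by (intro component_intro) auto
  have am: "adj (del_vs m Y) a b \<Longrightarrow> adj (del_vs m X) a b" for a b
    using XY by (auto simp: adj_del)
  have Rm: "(adj (del_vs m Y))\<^sup>*\<^sup>* a b \<Longrightarrow> (adj (del_vs m X))\<^sup>*\<^sup>* a b" for a b
    using am by (metis mono_rtranclp)
  have sub: "C' \<subseteq> C" using v Rm XY unfolding C_def by auto
  have eq: "\<forall>u\<in>C'. \<forall>w\<in>C'. adj (del_vs m Y) u w = adj (del_vs m X) u w"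
    using v XY by (auto simp: adj_del)
  have "proper_interval (del_vs m X) C \<or> is_tree (del_vs m X) C"
    using g compC unfolding good_def by blast
  then show "proper_interval (del_vs m Y) C' \<or> is_tree (del_vs m Y) C'"
  proof
    assume "proper_interval (del_vs m X) C"
    then show ?thesis using PI_mono sub eq by blast
  next
    assume t: "is_tree (del_vs m X) C"
    have "is_tree (del_vs m Y) C'" unfolding is_tree_def
    proof (intro conjI)
      show "C' \<noteq> {}" using v by auto
      show "\<forall>u\<in>C'. \<forall>w\<in>C'. (\<lambda>x y. x \<in> C' \<and> y \<in> C' \<and> adj (del_vs m Y) x y)\<^sup>*\<^sup>* u w"
        using comp_conn[OF wfg_del[OF mg] comp] by blast
      show "\<not> (\<exists>cs. is_cycle (del_vs m Y) C' cs)"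
      proof
        assume "\<exists>cs. is_cycle (del_vs m Y) C' cs"
        then obtain cs where "is_cycle (del_vs m Y) C' cs" by blast
        then have "is_cycle (del_vs m X) C cs"
          using cycle_mono[of _ C' cs _ C] am sub unfolding is_cycle_def by blast
        then show False using t unfolding is_tree_def by blast
      qed
    qed
    then show ?thesis by blast
  qed
qed



context tail begin

lemma ZP: "x \<in> Z \<Longrightarrow> x \<in> V" using Z_iff PV by auto

lemma notZ: "i < 2 \<Longrightarrow> i < L \<Longrightarrow> P ! i \<notin> Z"
  using Z_iff Pinj by (metis le_less_trans not_le)

lemma tailcomp:
  assumes jj: "1 \<le> jj" "jj < L" and inX: "P ! (jj - 1) \<in> X"
    and nX: "\<forall>t. jj \<le> t \<and> t < L \<longrightarrow> P ! t \<notin> X"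
    and comp: "component (V - X) (del_vs m X) C" and ne: "s \<in> C" "s \<in> set (drop jj P)"
  shows "C = set (drop jj P)"
proof (rule comp_closed_eq[OF wfg_del[OF mg] comp _ _ _ ne(2,1)])
  show "set (drop jj P) \<subseteq> V - X" using nX PV by (auto simp: in_set_drop_iff)
  show "\<forall>x\<in>set (drop jj P). \<forall>y. adj (del_vs m X) x y \<longrightarrow> y \<in> set (drop jj P)"
  proof (intro ballI allI impI)
    fix x y assume x: "x \<in> set (drop jj P)" and a: "adj (del_vs m X) x y"
    obtain i where i: "jj \<le> i" "i < L" "P ! i = x" using x in_set_drop_iff by metis
    have yX: "y \<notin> X" and am: "adj m (P ! i) y" using a i by (auto simp: adj_del)
    then have "y = P ! (i - 1) \<or> (i + 1 < L \<and> y = P ! (i + 1))" using nbr[of i] i jj by simp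
    then show "y \<in> set (drop jj P)"
    proof
      assume y: "y = P ! (i - 1)"
      then have "i - 1 \<noteq> jj - 1" using yX inX by auto
      then have "jj \<le> i - 1" using i by simp
      then show ?thesis using y i in_set_drop_iff by fastforce
    next
      assume "i + 1 < L \<and> y = P ! (i + 1)"
      then show ?thesis using i in_set_drop_iff[of y jj P] by (metis add_leD1 add_le_mono1 le_add1)
    qed
  qed
  show "\<forall>a\<in>set (drop jj P). \<forall>b\<in>set (drop jj P). (adj (del_vs m X))\<^sup>*\<^sup>* a b"
  proof (intro ballI)
    fix a b assume "a \<in> set (drop jj P)" "b \<in> set (drop jj P)"
    then obtain i j where "jj \<le> i" "i < L" "P ! i = a" "jj \<le> j" "j < L" "P ! j = b"
      unfolding in_set_drop_iff by blast
    then show "(adj (del_vs m X))\<^sup>*\<^sup>* a b" using pathR[OF nX] by blast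
  qed
qed

lemma b3_facts:
  assumes XZ: "X \<inter> Z = {}" and n0: "P ! 0 \<notin> X" and n1: "P ! 1 \<notin> X"
  shows "P ! 0 \<in> V - (Z \<union> X)" "P ! 1 \<in> V - (Z \<union> X)"
    "adj (del_vs m (Z \<union> X)) (P ! 1) y \<longleftrightarrow> y = P ! 0"
proof -
  have L: "2 < L" using len by simp
  show v1: "P ! 0 \<in> V - (Z \<union> X)" using PV[of 0] notZ[of 0] n0 L Pne by auto
  show v2: "P ! 1 \<in> V - (Z \<union> X)" using PV[of 1] notZ[of 1] n1 L Pne by auto
  have z2: "P ! 2 \<in> Z" using Z_iff L by auto
  have "adj m (P ! 1) y \<longleftrightarrow> y = P ! 0 \<or> y = P ! 2" using nbr[of 1 y] L by (simp add: numeral_2_eq_2)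
  then show "adj (del_vs m (Z \<union> X)) (P ! 1) y \<longleftrightarrow> y = P ! 0"
    using v1 v2 z2 by (auto simp: adj_del)
qed

lemma extend:
  assumes XZ: "X \<inter> Z = {}" and n0: "P ! 0 \<notin> X" and n1: "P ! 1 \<notin> X"
    and C0: "C0 = {u \<in> V - (Z \<union> X). (adj (del_vs m (Z \<union> X)))\<^sup>*\<^sup>* (P ! 1) u}"
    and md: "model (del_vs m (Z \<union> X)) C0 l r" and lt: "l (P ! 0) < l (P ! 1)"
  shows "model (del_vs m X) (C0 \<union> Z)
     (\<lambda>x. if x \<in> Z then r (P ! 1) + real (idx x) - 2 else l x)
     (\<lambda>x. if x \<in> Z then r (P ! 1) + real (idx x) - 1 else r x)"
proof -
  let ?E' = "del_vs m (Z \<union> X)" let ?E = "del_vs m X"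
  let ?v1 = "P ! 0" let ?v2 = "P ! 1"
  define a where "a = l ?v2" define b where "b = r ?v2"
  define c where "c = l ?v1" define d where "d = r ?v1"
  have L: "2 < L" using len by simp
  have wf': "wfg (V - (Z \<union> X)) ?E'" by (rule wfg_del[OF mg])
  have wf: "wfg (V - X) ?E" by (rule wfg_del[OF mg])
  note bf = b3_facts[OF XZ n0 n1]
  have v2C: "?v2 \<in> C0" using C0 bf by simp
  have a21: "adj ?E' ?v2 ?v1" using bf by simp
  have v1C: "?v1 \<in> C0" using C0 bf a21 by auto
  have v12: "?v1 \<noteq> ?v2" using Pinj[of 0 1] L Pne by simp
  have C0W: "C0 \<subseteq> V - (Z \<union> X)" using C0 by auto
  have lr: "\<forall>v\<in>C0. l v \<le> r v"
    and ad: "\<forall>u\<in>C0. \<forall>v\<in>C0. u \<noteq> v \<longrightarrow> (adj ?E' u v \<longleftrightarrow> l u \<le> r v \<and> l v \<le> r u)"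
    and nc: "\<forall>u\<in>C0. \<forall>v\<in>C0. \<not> (l u \<le> l v \<and> r v \<le> r u \<and> (l u < l v \<or> r v < r u))"
    using md unfolding model_def by auto
  have h1: "a \<le> d" using ad v1C v2C v12 a21 unfolding a_def d_def by auto
  have h2: "d < b" using nc v1C v2C lt unfolding b_def d_def by force
  have lt': "c < a" using lt unfolding a_def c_def .
  have ab: "a \<le> b" using lr v2C unfolding a_def b_def by auto
  have irr: "adj ?E' x y \<Longrightarrow> x \<noteq> y" for x y using adj_irrefl[OF mg] by (auto simp: adj_del)
  have v2only: "adj ?E' ?v2 y \<longleftrightarrow> y = ?v1" for y using bf by simp
  have key0: "(adj ?E')\<^sup>*\<^sup>* ?v2 w \<Longrightarrow> w \<in> C0 \<and> l w \<le> b \<and> (w \<noteq> ?v1 \<and> w \<noteq> ?v2 \<longrightarrow> r w < a)" for w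
  proof (induction rule: rtranclp_induct)
    case base then show ?case using v2C ab unfolding a_def by simp
  next
    case (step x y)
    have yC: "y \<in> C0" using step wf' C0 unfolding wfg_def by (auto intro: rtranclp.rtrancl_into_rtrancl)
    have xC: "x \<in> C0" using step by simp
    show ?case
    proof (cases "y = ?v1 \<or> y = ?v2")
      case True then show ?thesis using yC lt' ab unfolding a_def b_def c_def by auto
    next
      case False
      have "\<not> adj ?E' y ?v2" using v2only adj_sym[OF wf'] False by metis
      then have ny: "\<not> (l y \<le> b \<and> a \<le> r y)" using ad yC v2C False unfolding a_def b_def by auto
      have xy: "x \<noteq> y" using irr step by simp
      have axy: "l x \<le> r y \<and> l y \<le> r x" using ad xC yC xy step(2) by auto
      have "l y \<le> b"
      proof (rule ccontr)
        assume lyb: "\<not> l y \<le> b"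
        show False
        proof (cases "x = ?v2")
          case True then show False using v2only step(2) False by simp
        next
          case F2: False
          show False
          proof (cases "x = ?v1")
            case True then show False using axy lyb h2 unfolding d_def by simp
          next
            case False
            then have "r x < a" using step(3) F2 by simp
            then show False using axy lyb ab by simp
          qed
        qed
      qed
      then show ?thesis using ny yC by auto
    qed
  qed
  have key: "l w \<le> b \<and> (w \<noteq> ?v1 \<and> w \<noteq> ?v2 \<longrightarrow> r w < a)" if "w \<in> C0" for w
    using key0 that C0 by blast
  have bnd: "l w \<le> r w \<and> r w \<le> b \<and> (r w = b \<longrightarrow> w = ?v2)" if "w \<in> C0" for w
  proof -
    have "l w \<le> r w" using lr that by simp
    moreover have "w \<noteq> ?v2 \<longrightarrow> r w < b"
      using key[OF that] h2 ab unfolding d_def by (cases "w = ?v1") auto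
    moreover have "r ?v2 = b" unfolding b_def ..
    ultimately show ?thesis by auto
  qed
  have ab': "a < b" using h1 h2 by simp
  have C0Z: "x \<in> C0 \<Longrightarrow> x \<notin> Z" for x using C0W by auto
  have Zi: "\<exists>i. 2 \<le> i \<and> i < L \<and> x = P ! i \<and> idx x = i" if "x \<in> Z" for x
    using that Z_iff idx_nth by metis
  have XZ': "x \<in> Z \<Longrightarrow> x \<notin> X" for x using XZ by auto
  define l2 where "l2 = (\<lambda>x. if x \<in> Z then r (P ! 1) + real (idx x) - 2 else l x)"
  define r2 where "r2 = (\<lambda>x. if x \<in> Z then r (P ! 1) + real (idx x) - 1 else r x)"
  have mixed: "adj ?E x w \<longleftrightarrow> l2 x \<le> r2 w \<and> l2 w \<le> r2 x" if x: "x \<in> Z" and w: "w \<in> C0" for x w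
  proof -
    obtain i where i: "2 \<le> i" "i < L" "x = P ! i" "idx x = i" using Zi[OF x] by blast
    have wZ: "w \<notin> Z" using C0Z w by simp
    have wX: "w \<notin> X" using C0W w by auto
    have "adj ?E x w \<longleftrightarrow> adj m (P ! i) w" using XZ' x wX i by (simp add: adj_del)
    also have "\<dots> \<longleftrightarrow> (i = 2 \<and> w = ?v2)"
    proof
      assume "adj m (P ! i) w"
      then have "w = P ! (i - 1) \<or> (i + 1 < L \<and> w = P ! (i + 1))" using nbr[of i] i by simp
      moreover have "\<not> (i + 1 < L \<and> w = P ! (i + 1))" using wZ Z_iff i by auto
      ultimately have w1: "w = P ! (i - 1)" by blast
      moreover have "i - 1 < L" using i by simp
      ultimately have "\<not> 2 \<le> i - 1" using wZ Z_iff[of w] by blast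
      then have i2: "i = 2" using i by simp
      then show "i = 2 \<and> w = ?v2" using w1 by simp
    next
      assume "i = 2 \<and> w = ?v2"
      then show "adj m (P ! i) w" using padj'[of 2] L by simp
    qed
    also have "\<dots> \<longleftrightarrow> l2 x \<le> r2 w \<and> l2 w \<le> r2 x"
    proof -
      have "l2 x = b + real i - 2" "r2 x = b + real i - 1" "l2 w = l w" "r2 w = r w"
        using x wZ i unfolding l2_def r2_def b_def by auto
      moreover have "real i \<ge> 2" using i by simp
      moreover note bnd[OF w]
      ultimately show ?thesis using ab' unfolding a_def b_def
        by (cases "i = 2"; cases "w = ?v2"; auto)
    qed
    finally show ?thesis .
  qed
  have "model ?E (C0 \<union> Z) l2 r2" unfolding model_def
  proof (intro conjI ballI impI)
    fix v assume "v \<in> C0 \<union> Z"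
    then show "l2 v \<le> r2 v" using lr unfolding l2_def r2_def by auto
  next
    fix u w assume u: "u \<in> C0 \<union> Z" and w: "w \<in> C0 \<union> Z" and uw: "u \<noteq> w"
    show "adj ?E u w \<longleftrightarrow> l2 u \<le> r2 w \<and> l2 w \<le> r2 u"
    proof (cases "u \<in> Z")
      case uZ: True
      show ?thesis
      proof (cases "w \<in> Z")
        case True
        obtain i where i: "2 \<le> i" "i < L" "u = P ! i" "idx u = i" using Zi[OF uZ] by blast
        obtain j where j: "2 \<le> j" "j < L" "w = P ! j" "idx w = j" using Zi[OF True] by blast
        have "adj ?E u w \<longleftrightarrow> (i = j + 1 \<or> j = i + 1)"
          using adjP[of i j] i j XZ' uZ True by (simp add: adj_del)
        moreover have "i \<noteq> j" using uw i j by auto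
        moreover have "real i \<le> real j + 1 \<longleftrightarrow> i \<le> j + 1" "real j \<le> real i + 1 \<longleftrightarrow> j \<le> i + 1" by linarith+
        ultimately show ?thesis using i j uZ True unfolding l2_def r2_def by auto
      next
        case False
        then show ?thesis using mixed[OF uZ] w by auto
      qed
    next
      case uZ: False
      show ?thesis
      proof (cases "w \<in> Z")
        case True
        have "adj ?E u w = adj ?E w u" using adj_sym[OF wf] .
        then show ?thesis using mixed[OF True] u uZ by auto
      next
        case False
        then have "u \<in> C0" "w \<in> C0" using u w uZ by auto
        moreover have "adj ?E u w = adj ?E' u w" using uZ False by (simp add: adj_del)
        ultimately show ?thesis using ad uw uZ False unfolding l2_def r2_def by auto
      qed
    qed
  next
    fix u w assume u: "u \<in> C0 \<union> Z" and w: "w \<in> C0 \<union> Z"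
    show "\<not> (l2 u \<le> l2 w \<and> r2 w \<le> r2 u \<and> (l2 u < l2 w \<or> r2 w < r2 u))"
    proof (cases "u \<in> Z")
      case uZ: True
      obtain i where i: "2 \<le> i" "i < L" "u = P ! i" "idx u = i" using Zi[OF uZ] by blast
      show ?thesis
      proof (cases "w \<in> Z")
        case True
        obtain j where j: "2 \<le> j" "j < L" "w = P ! j" "idx w = j" using Zi[OF True] by blast
        show ?thesis using i j uZ True unfolding l2_def r2_def by auto
      next
        case False
        then have wC: "w \<in> C0" using w by auto
        have "real i \<ge> 2" using i by simp
        then show ?thesis using bnd[OF wC] ab' i uZ False unfolding l2_def r2_def a_def b_def
          by (cases "w = ?v2") auto
      qed
    next
      case uZ: False
      then have uC: "u \<in> C0" using u by auto
      show ?thesis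
      proof (cases "w \<in> Z")
        case True
        obtain j where j: "2 \<le> j" "j < L" "w = P ! j" "idx w = j" using Zi[OF True] by blast
        have "real j \<ge> 2" using j by simp
        then show ?thesis using bnd[OF uC] j uZ True unfolding l2_def r2_def b_def by auto
      next
        case False
        then show ?thesis using nc uC w uZ unfolding l2_def r2_def by auto
      qed
    qed
  qed
  then show ?thesis unfolding l2_def r2_def .
qed

end


lemma pitvd_good: "pitvd_yes V m k \<longleftrightarrow> (\<exists>X\<subseteq>V. card X \<le> k \<and> simple_mg (del_vs m X) \<and> good (V - X) (del_vs m X))"
  by (simp add: pitvd_yes_def good_def)

context tail begin

lemma back_simple:
  assumes XV: "X \<subseteq> V - Z" and sm: "simple_mg (del_vs m (Z \<union> X))"
  shows "simple_mg (del_vs m X)"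
  unfolding simple_mg_def
proof (intro allI)
  fix u v
  show "del_vs m X u v \<le> 1"
  proof (cases "u \<in> X \<or> v \<in> X")
    case True then show ?thesis by (simp add: del_vs_def)
  next
    case nX: False
    show ?thesis
    proof (cases "u \<in> Z")
      case True
      then obtain i where "2 \<le> i" "i < L" "P ! i = u" using Z_iff by blast
      then show ?thesis using mle1[of i v] nX by (simp add: del_vs_def)
    next
      case uZ: False
      show ?thesis
      proof (cases "v \<in> Z")
        case True
        then obtain i where "2 \<le> i" "i < L" "P ! i = v" using Z_iff by blast
        then show ?thesis using mle1[of i u] nX msym[of u v] by (simp add: del_vs_def)
      next
        case False
        have "del_vs m (Z \<union> X) u v \<le> 1" using sm unfolding simple_mg_def by blast
        then show ?thesis using uZ False nX by (simp add: del_vs_def)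
      qed
    qed
  qed
qed

lemma back_good:
  assumes XV: "X \<subseteq> V - Z" and g: "good (V - (Z \<union> X)) (del_vs m (Z \<union> X))"
  shows "good (V - X) (del_vs m X)"
  unfolding good_def
proof (intro allI impI)
  fix C assume comp: "component (V - X) (del_vs m X) C"
  let ?E = "del_vs m X" let ?E' = "del_vs m (Z \<union> X)"
  let ?W = "V - X" let ?W' = "V - (Z \<union> X)"
  have XZ: "X \<inter> Z = {}" using XV by auto
  have nXZ: "\<forall>t. 2 \<le> t \<and> t < L \<longrightarrow> P ! t \<notin> X" using XZ Z_iff by blast
  have wf: "wfg ?W ?E" by (rule wfg_del[OF mg])
  have wf': "wfg ?W' ?E'" by (rule wfg_del[OF mg])
  have eqZ: "x \<notin> Z \<Longrightarrow> y \<notin> Z \<Longrightarrow> adj ?E x y = adj ?E' x y" for x y by (simp add: adj_del)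
  have mE: "adj ?E' x y \<Longrightarrow> adj ?E x y" for x y by (simp add: adj_del)
  have RmE: "(adj ?E')\<^sup>*\<^sup>* a b \<Longrightarrow> (adj ?E)\<^sup>*\<^sup>* a b" for a b using mE by (metis mono_rtranclp)
  have L: "2 < L" using len by simp
  show "proper_interval ?E C \<or> is_tree ?E C"
  proof (cases "C \<inter> Z = {}")
    case True
    obtain v where v: "v \<in> ?W" "C = {u \<in> ?W. (adj ?E)\<^sup>*\<^sup>* v u}"
      using comp unfolding component_def by blast
    have vC: "v \<in> C" using v by simp
    have vW': "v \<in> ?W'" using vC True v by auto
    have RR: "(adj ?E)\<^sup>*\<^sup>* v u \<Longrightarrow> (adj ?E')\<^sup>*\<^sup>* v u" for u
    proof (induction rule: rtranclp_induct)
      case base then show ?case by simp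
    next
      case (step x y)
      have "x \<in> ?W" "y \<in> ?W" using step(2) wf unfolding wfg_def by blast+
      moreover have "(adj ?E)\<^sup>*\<^sup>* v y" using step(1,2) by (rule rtranclp.rtrancl_into_rtrancl)
      ultimately have "x \<in> C" "y \<in> C" using v step(1) by auto
      then have "x \<notin> Z" "y \<notin> Z" using True by auto
      then have "adj ?E' x y" using eqZ step(2) by simp
      with step(3) show ?case by (rule rtranclp.rtrancl_into_rtrancl)
    qed
    have C': "C = {u \<in> ?W'. (adj ?E')\<^sup>*\<^sup>* v u}"
    proof
      show "C \<subseteq> {u \<in> ?W'. (adj ?E')\<^sup>*\<^sup>* v u}" using v True RR by auto
      show "{u \<in> ?W'. (adj ?E')\<^sup>*\<^sup>* v u} \<subseteq> C" using v RmE by auto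
    qed
    have comp': "component ?W' ?E' C" unfolding C' using vW' by (rule component_intro)
    have eqC: "\<forall>u\<in>C. \<forall>w\<in>C. adj ?E u w = adj ?E' u w" using eqZ True by blast
    have "proper_interval ?E' C \<or> is_tree ?E' C" using g comp' unfolding good_def by blast
    then show ?thesis using loc_PI[OF eqC] loc_tree[OF eqC] by blast
  next
    case False
    then obtain z where zC: "z \<in> C" and zZ: "z \<in> Z" by blast
    show ?thesis
    proof (cases "P ! 1 \<in> X")
      case True
      have "C = set (drop 2 P)"
        using tailcomp[of 2 X C z] L True nXZ comp zC zZ unfolding Z_def by simp
      moreover have "model ?E (set (drop 2 P)) (\<lambda>x. real (idx x)) (\<lambda>x. real (idx x) + 1)"
        using path_model nXZ by blast
      ultimately show ?thesis using PI_model by blast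
    next
      case n1: False
      have nX1: "\<forall>t. 1 \<le> t \<and> t < L \<longrightarrow> P ! t \<notin> X"
      proof (intro allI impI)
        fix t assume "1 \<le> t \<and> t < L"
        then show "P ! t \<notin> X" using n1 nXZ by (cases "t = 1") auto
      qed
      show ?thesis
      proof (cases "P ! 0 \<in> X")
        case True
        have z1: "z \<in> set (drop 1 P)" using zZ Z_iff in_set_drop_iff[of z 1 P] by force
        have "C = set (drop 1 P)"
          using tailcomp[of 1 X C z] L True nX1 comp zC z1 by simp
        moreover have "model ?E (set (drop 1 P)) (\<lambda>x. real (idx x)) (\<lambda>x. real (idx x) + 1)"
          using path_model nX1 by blast
        ultimately show ?thesis using PI_model by blast
      next
        case n0: False
        note bf = b3_facts[OF XZ n0 n1]
        define C0 where "C0 = {u \<in> ?W'. (adj ?E')\<^sup>*\<^sup>* (P ! 1) u}"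
        have comp0: "component ?W' ?E' C0" unfolding C0_def using bf(2) by (rule component_intro)
        have v2C: "P ! 1 \<in> C0" using bf unfolding C0_def by simp
        have v1C: "P ! 0 \<in> C0" using bf unfolding C0_def by auto
        have C0W: "C0 \<subseteq> ?W'" unfolding C0_def by auto
        have CS: "C = C0 \<union> Z"
        proof (rule comp_closed_eq[OF wf comp])
          show "C0 \<union> Z \<subseteq> ?W" using C0W ZP XZ by auto
          show "\<forall>x\<in>C0 \<union> Z. \<forall>y. adj ?E x y \<longrightarrow> y \<in> C0 \<union> Z"
          proof (intro ballI allI impI)
            fix x y assume x: "x \<in> C0 \<union> Z" and a: "adj ?E x y"
            show "y \<in> C0 \<union> Z"
            proof (cases "x \<in> Z")
              case False
              then have xC: "x \<in> C0" using x by simp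
              show ?thesis
              proof (cases "y \<in> Z")
                case True then show ?thesis by simp
              next
                case yZ: False
                have a': "adj ?E' x y" using eqZ[OF False yZ] a by simp
                then have "y \<in> ?W'" using wf' unfolding wfg_def by blast
                moreover have "(adj ?E')\<^sup>*\<^sup>* (P ! 1) y"
                  using xC a' unfolding C0_def by (auto intro: rtranclp.rtrancl_into_rtrancl)
                ultimately show ?thesis unfolding C0_def by simp
              qed
            next
              case True
              then obtain i where i: "2 \<le> i" "i < L" "P ! i = x" using Z_iff by blast
              have "adj m (P ! i) y" using a i by (simp add: adj_del)
              then have "y = P ! (i - 1) \<or> (i + 1 < L \<and> y = P ! (i + 1))" using nbr[of i y] i by simp
              then show ?thesis
              proof
                assume y: "y = P ! (i - 1)"
                show ?thesis
                proof (cases "2 \<le> i - 1")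
                  case True
                  have "y \<in> Z" unfolding Z_iff using True y i by (intro exI[of _ "i - 1"]) simp
                  then show ?thesis by simp
                next
                  case False
                  then have "i - 1 = 1" using i by simp
                  then show ?thesis using y v2C by simp
                qed
              next
                assume h: "i + 1 < L \<and> y = P ! (i + 1)"
                have "y \<in> Z" unfolding Z_iff using h i by (intro exI[of _ "i + 1"]) simp
                then show ?thesis by simp
              qed
            qed
          qed
          have toV2: "(adj ?E)\<^sup>*\<^sup>* (P ! 1) a" if "a \<in> C0 \<union> Z" for a
          proof (cases "a \<in> C0")
            case True then show ?thesis using RmE unfolding C0_def by auto
          next
            case False
            then have "a \<in> Z" using that by simp
            then obtain i where "2 \<le> i" "i < L" "P ! i = a" using Z_iff by blast
            then show ?thesis using pathR[OF nX1, of 1 i] L by simp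
          qed
          show "\<forall>a\<in>C0 \<union> Z. \<forall>b\<in>C0 \<union> Z. (adj ?E)\<^sup>*\<^sup>* a b"
          proof (intro ballI)
            fix a b assume "a \<in> C0 \<union> Z" "b \<in> C0 \<union> Z"
            then have "(adj ?E)\<^sup>*\<^sup>* a (P ! 1)" "(adj ?E)\<^sup>*\<^sup>* (P ! 1) b"
              using toV2 R_sym[OF wf] by blast+
            then show "(adj ?E)\<^sup>*\<^sup>* a b" by (rule rtranclp_trans)
          qed
          show "z \<in> C0 \<union> Z" using zZ by simp
          show "z \<in> C" by (rule zC)
        qed
        have C0Z: "C0 \<inter> Z = {}" using C0W by auto
        have eqC0: "\<forall>u\<in>C0. \<forall>w\<in>C0. adj ?E u w = adj ?E' u w" using eqZ C0Z by blast
        have "proper_interval ?E' C0 \<or> is_tree ?E' C0" using g comp0 unfolding good_def by blast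
        then show ?thesis
        proof
          assume t: "is_tree ?E' C0"
          have "is_tree ?E C" unfolding is_tree_def
          proof (intro conjI)
            show "C \<noteq> {}" using zC by auto
            show "\<forall>u\<in>C. \<forall>w\<in>C. (\<lambda>x y. x \<in> C \<and> y \<in> C \<and> adj ?E x y)\<^sup>*\<^sup>* u w"
              using comp_conn[OF wf comp] by blast
            show "\<not> (\<exists>cs. is_cycle ?E C cs)"
            proof
              assume "\<exists>cs. is_cycle ?E C cs"
              then obtain cs where cy: "is_cycle ?E C cs" by blast
              have cym: "is_cycle m C cs" using cycle_mono[OF cy, of m C] cy
                unfolding is_cycle_def by (auto simp: adj_del)
              have "x \<notin> Z" if "x \<in> set cs" for x
              proof
                assume "x \<in> Z"
                then obtain i where "2 \<le> i" "i < L" "P ! i = x" using Z_iff by blast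
                then show False using nocyc[of i C cs] cym that by simp
              qed
              moreover have "set cs \<subseteq> C" using cy unfolding is_cycle_def by simp
              ultimately have sc: "set cs \<subseteq> C0" using CS by auto
              have "is_cycle ?E C0 cs" using cycle_mono[OF cy _ sc] by blast
              then have "is_cycle ?E' C0 cs" using loc_cycle[OF eqC0] by simp
              then show False using t unfolding is_tree_def by blast
            qed
          qed
          then show ?thesis by blast
        next
          assume "proper_interval ?E' C0"
          then obtain l r where md: "model ?E' C0 l r" using PI_model by blast
          have lr: "\<forall>v\<in>C0. l v \<le> r v"
            and ad: "\<forall>u\<in>C0. \<forall>v\<in>C0. u \<noteq> v \<longrightarrow> (adj ?E' u v \<longleftrightarrow> l u \<le> r v \<and> l v \<le> r u)"
            and nc: "\<forall>u\<in>C0. \<forall>v\<in>C0. \<not> (l u \<le> l v \<and> r v \<le> r u \<and> (l u < l v \<or> r v < r u))"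
            using md unfolding model_def by auto
          consider (lt) "l (P ! 0) < l (P ! 1)" | (gt) "l (P ! 1) < l (P ! 0)" | (eq) "l (P ! 0) = l (P ! 1)"
            by linarith
          then show ?thesis
          proof cases
            case lt
            show ?thesis using extend[OF XZ n0 n1 C0_def md lt] CS PI_model by blast
          next
            case gt
            have "\<not> (r (P ! 0) \<le> r (P ! 1))" using nc v1C v2C gt by force
            then have lt': "- r (P ! 0) < - r (P ! 1)" by simp
            show ?thesis using extend[OF XZ n0 n1 C0_def model_reflect[OF md] lt'] CS PI_model by blast
          next
            case eq
            have n1': "\<not> (l (P ! 0) \<le> l (P ! 1) \<and> r (P ! 1) \<le> r (P ! 0) \<and> (l (P ! 0) < l (P ! 1) \<or> r (P ! 1) < r (P ! 0)))"
              using nc v1C v2C by blast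
            have n2': "\<not> (l (P ! 1) \<le> l (P ! 0) \<and> r (P ! 0) \<le> r (P ! 1) \<and> (l (P ! 1) < l (P ! 0) \<or> r (P ! 0) < r (P ! 1)))"
              using nc v1C v2C by blast
            have req: "r (P ! 0) = r (P ! 1)" using n1' n2' eq by linarith
            have v12: "P ! 0 \<noteq> P ! 1" using Pinj[of 0 1] L Pne by simp
            have C0e: "C0 = {P ! 0, P ! 1}"
            proof (rule comp_closed_eq[OF wf' comp0])
              show "{P ! 0, P ! 1} \<subseteq> ?W'" using bf by auto
              show "\<forall>x\<in>{P ! 0, P ! 1}. \<forall>y. adj ?E' x y \<longrightarrow> y \<in> {P ! 0, P ! 1}"
              proof (intro ballI allI impI)
                fix x y assume x: "x \<in> {P ! 0, P ! 1}" and a: "adj ?E' x y"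
                show "y \<in> {P ! 0, P ! 1}"
                proof (cases "x = P ! 1")
                  case True then show ?thesis using a bf(3) by simp
                next
                  case False
                  then have x0: "x = P ! 0" using x by simp
                  have yW: "y \<in> ?W'" using a wf' unfolding wfg_def by blast
                  have "(adj ?E')\<^sup>*\<^sup>* (P ! 1) y"
                    using v1C a x0 unfolding C0_def by (auto intro: rtranclp.rtrancl_into_rtrancl)
                  then have yC: "y \<in> C0" using yW unfolding C0_def by simp
                  have "y \<noteq> x" using a adj_irrefl[OF mg] by (auto simp: adj_del)
                  show ?thesis
                  proof (rule ccontr)
                    assume "y \<notin> {P ! 0, P ! 1}"
                    then have yn: "y \<noteq> P ! 0" "y \<noteq> P ! 1" by auto
                    have "l (P ! 0) \<le> r y \<and> l y \<le> r (P ! 0)" using ad v1C yC yn a x0 by auto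
                    then have "adj ?E' (P ! 1) y" using ad v2C yC yn eq req by auto
                    then show False using bf(3) yn by simp
                  qed
                qed
              qed
              have r10: "(adj ?E')\<^sup>*\<^sup>* (P ! 1) (P ! 0)" using bf by auto
              have r01: "(adj ?E')\<^sup>*\<^sup>* (P ! 0) (P ! 1)" using R_sym[OF wf' r10] .
              show "\<forall>a\<in>{P ! 0, P ! 1}. \<forall>b\<in>{P ! 0, P ! 1}. (adj ?E')\<^sup>*\<^sup>* a b"
                using r10 r01 by auto
              show "P ! 1 \<in> {P ! 0, P ! 1}" by simp
              show "P ! 1 \<in> C0" by (rule v2C)
            qed
            have "set P = {P ! 0, P ! 1} \<union> Z"
            proof
              show "set P \<subseteq> {P ! 0, P ! 1} \<union> Z"
              proof
                fix x assume "x \<in> set P"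
                then obtain i where i: "i < L" "P ! i = x" by (auto simp: in_set_conv_nth)
                show "x \<in> {P ! 0, P ! 1} \<union> Z"
                proof (cases "i < 2")
                  case True
                  then have "i = 0 \<or> i = 1" by auto
                  then show ?thesis using i by auto
                next
                  case False
                  have "x \<in> Z" unfolding Z_iff using i False by (intro exI[of _ i]) simp
                  then show ?thesis by simp
                qed
              qed
              have p0: "P ! 0 \<in> set P" by (rule nth_mem) (use L Pne in simp)
              have p1: "P ! 1 \<in> set P" by (rule nth_mem) (use L Pne in simp)
              have "Z \<subseteq> set P" unfolding Z_def by (rule set_drop_subset)
              then show "{P ! 0, P ! 1} \<union> Z \<subseteq> set P" using p0 p1 by auto
            qed
            then have Cset: "C = set (drop 0 P)" using CS C0e by simp
            have nX0: "\<forall>t. 0 \<le> t \<and> t < L \<longrightarrow> P ! t \<notin> X"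
            proof (intro allI impI)
              fix t assume "0 \<le> t \<and> t < L"
              then show "P ! t \<notin> X" using n0 nX1 by (cases "t = 0") auto
            qed
            have "model ?E (set (drop 0 P)) (\<lambda>x. real (idx x)) (\<lambda>x. real (idx x) + 1)"
              using path_model nX0 by blast
            then show ?thesis using Cset PI_model by blast
          qed
        qed
      qed
    qed
  qed
qed

end

theorem lemma16:
  fixes V :: "'a set" and m :: "'a \<Rightarrow> 'a \<Rightarrow> nat" and k :: nat and P :: "'a list"
  assumes "multigraph V m"
    and "deg2_tail V m P"
    and "3 \<le> length P"
  shows "pitvd_yes V m k \<longleftrightarrow>
         pitvd_yes (V - set (drop 2 P)) (del_vs m (set (drop 2 P))) k"
proof -
  interpret tail V m P using assms by unfold_locales
  have Zd: "set (drop 2 P) = Z" unfolding Z_def ..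
  show ?thesis unfolding Zd pitvd_good del_del
  proof
    assume "\<exists>X\<subseteq>V. card X \<le> k \<and> simple_mg (del_vs m X) \<and> good (V - X) (del_vs m X)"
    then obtain X where X: "X \<subseteq> V" "card X \<le> k" "simple_mg (del_vs m X)" "good (V - X) (del_vs m X)"
      by blast
    have fX: "finite X" using X(1) finV finite_subset by blast
    have "card (X - Z) \<le> k" using card_mono[OF fX, of "X - Z"] X(2) by auto
    moreover have "simple_mg (del_vs m (Z \<union> (X - Z)))"
      unfolding simple_mg_def
    proof (intro allI)
      fix u v
      have "del_vs m X u v \<le> 1" using X(3) unfolding simple_mg_def by blast
      then show "del_vs m (Z \<union> (X - Z)) u v \<le> 1" by (auto simp: del_vs_def split: if_splits)
    qed
    moreover have "good (V - Z - (X - Z)) (del_vs m (Z \<union> (X - Z)))"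
    proof -
      have "good (V - (Z \<union> X)) (del_vs m (Z \<union> X))" using good_mono[OF mg _ X(4)] by blast
      moreover have "V - Z - (X - Z) = V - (Z \<union> X)" "Z \<union> (X - Z) = Z \<union> X" by auto
      ultimately show ?thesis by simp
    qed
    moreover have "X - Z \<subseteq> V - Z" using X(1) by auto
    ultimately show "\<exists>X\<subseteq>V - Z. card X \<le> k \<and> simple_mg (del_vs m (Z \<union> X)) \<and>
        good (V - Z - X) (del_vs m (Z \<union> X))" by blast
  next
    assume "\<exists>X\<subseteq>V - Z. card X \<le> k \<and> simple_mg (del_vs m (Z \<union> X)) \<and>
        good (V - Z - X) (del_vs m (Z \<union> X))"
    then obtain X where X: "X \<subseteq> V - Z" "card X \<le> k" "simple_mg (del_vs m (Z \<union> X))"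
        "good (V - Z - X) (del_vs m (Z \<union> X))" by blast
    have "V - Z - X = V - (Z \<union> X)" by auto
    then have g: "good (V - (Z \<union> X)) (del_vs m (Z \<union> X))" using X(4) by simp
    show "\<exists>X\<subseteq>V. card X \<le> k \<and> simple_mg (del_vs m X) \<and> good (V - X) (del_vs m X)"
      using X(1,2) back_simple[OF X(1,3)] back_good[OF X(1) g] by blast
  qed
qed


end
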